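(* Let $H$ be a real Hilbert space, $f:H\to\mathbb{R}\cup\{+\infty\}$ a proper lower semicontinuous function, $\bar x\in\operatorname{dom}f$, $p\in\partial_pf(\bar x)$, and $A\subset H$ a nonempty compact set. The following are equivalent: (i) there exists $\beta>0$ such that $f''_-(\bar x,p,h)\ge\beta$ holds uniformly with respect to $h\in A$; (ii) there exists $\beta>0$ such that $f''_-(\bar x,p,h)\ge\beta$ for all $h\in A$; (iii) $f''_-(\bar x,p,h)>0$ for all $h\in A$.
   Context: $B_H$ is the closed unit ball of $H$. Proximal subdifferential: $\zeta\in\partial_p f(x)$ iff there exist $\sigma,\delta>0$ with $f(y)\ge f(x)+\langle\zeta,y-x\rangle-\frac{\sigma}{2}\|y-x\|^2$ whenever $\|y-x\|<\delta$. $\Delta_2 f(\bar x,p,t,u):=\frac{f(\bar x+tu)-f(\bar x)-t\langle p,u\rangle}{\frac12t^2}$ for $t>0$, and $f''_-(\bar x,p,h):=\liminf_{h'\to h,\,t\downarrow0}\Delta_2f(\bar x,p,t,h')$. Definition: for $\beta>0$ and nonempty $A\subset H$, "$f''_-(\bar x,p,h)\ge\beta$ holds uniformly with respect to $h\in A$" means that for every $\varepsilon>0$ there exists $\delta>0$ such that $\Delta_2f(\bar x,p,t,h)\ge\beta-\varepsilon$ for all $t\in(0,\delta)$ and all $h\in A+\delta B_H$. *)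

theory Defs
  imports "HOL-Analysis.Analysis"
begin

definition proper_fun :: "('a \<Rightarrow> ereal) \<Rightarrow> bool" where
  "proper_fun f \<longleftrightarrow> (\<forall>x. f x \<noteq> -\<infinity>) \<and> (\<exists>x. f x \<noteq> \<infinity>)"

definition lsc_fun :: "('a::topological_space \<Rightarrow> ereal) \<Rightarrow> bool" where
  "lsc_fun f \<longleftrightarrow> (\<forall>x. f x \<le> Liminf (at x) f)"

definition dom_fun :: "('a \<Rightarrow> ereal) \<Rightarrow> 'a set" where
  "dom_fun f = {x. f x < \<infinity>}"

definition prox_subdiff :: "('a::real_inner \<Rightarrow> ereal) \<Rightarrow> 'a \<Rightarrow> 'a set" where
  "prox_subdiff f x = {\<zeta>. \<exists>\<sigma>>0. \<exists>\<delta>>0. \<forall>y. norm (y - x) < \<delta> \<longrightarrow>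
      f y \<ge> f x + ereal (inner \<zeta> (y - x) - \<sigma> / 2 * (norm (y - x))\<^sup>2)}"

definition Delta2 :: "('a::real_inner \<Rightarrow> ereal) \<Rightarrow> 'a \<Rightarrow> 'a \<Rightarrow> real \<Rightarrow> 'a \<Rightarrow> ereal" where
  "Delta2 f xb p t u = (f (xb + t *\<^sub>R u) - f xb - ereal (t * inner p u)) / ereal (t\<^sup>2 / 2)"

definition lower_sod :: "('a::real_inner \<Rightarrow> ereal) \<Rightarrow> 'a \<Rightarrow> 'a \<Rightarrow> 'a \<Rightarrow> ereal" where
  "lower_sod f xb p h = Liminf (nhds h \<times>\<^sub>F at_right 0) (\<lambda>(h', t). Delta2 f xb p t h')"

definition unif_sod_ge :: "('a::real_inner \<Rightarrow> ereal) \<Rightarrow> 'a \<Rightarrow> 'a \<Rightarrow> real \<Rightarrow> 'a set \<Rightarrow> bool" where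
  "unif_sod_ge f xb p \<beta> A \<longleftrightarrow> (\<forall>\<epsilon>>0. \<exists>\<delta>>0. \<forall>t\<in>{0<..<\<delta>}. \<forall>h.
      (\<exists>a\<in>A. norm (h - a) \<le> \<delta>) \<longrightarrow> Delta2 f xb p t h \<ge> ereal (\<beta> - \<epsilon>))"

end

theory Submission
  imports Defs
begin

lemma i_ii:
  fixes f :: "'a::real_inner \<Rightarrow> ereal"
  assumes u: "unif_sod_ge f xb p \<beta> A" and h: "h \<in> A"
  shows "ereal \<beta> \<le> lower_sod f xb p h"
  unfolding lower_sod_def le_Liminf_iff
proof (intro allI impI)
  fix y assume "y < ereal \<beta>"
  then obtain z where z: "y < ereal z" "ereal z < ereal \<beta>" using ereal_dense2 by blast
  define \<epsilon> where "\<epsilon> = \<beta> - z"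
  have "\<epsilon> > 0" using z by (simp add: \<epsilon>_def)
  then obtain \<delta> where d: "\<delta> > 0" and dd: "\<forall>t\<in>{0<..<\<delta>}. \<forall>h.
      (\<exists>a\<in>A. norm (h - a) \<le> \<delta>) \<longrightarrow> Delta2 f xb p t h \<ge> ereal (\<beta> - \<epsilon>)"
    using u unfolding unif_sod_ge_def by blast
  show "\<forall>\<^sub>F x in nhds h \<times>\<^sub>F at_right 0. y < (case x of (h', t) \<Rightarrow> Delta2 f xb p t h')"
    unfolding eventually_prod_filter
  proof (intro exI conjI)
    show "eventually (\<lambda>h'. dist h' h < \<delta>) (nhds h)"
      unfolding eventually_nhds_metric using d by blast
    show "eventually (\<lambda>t. t \<in> {0<..<\<delta>}) (at_right (0::real))"
      using d by (rule eventually_at_right_real)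
    show "\<forall>x ya. dist x h < \<delta> \<longrightarrow> ya \<in> {0<..<\<delta>} \<longrightarrow> y < (case (x, ya) of (h', t) \<Rightarrow> Delta2 f xb p t h')"
    proof (intro allI impI)
      fix x t assume a: "dist x h < \<delta>" "t \<in> {0<..<\<delta>}"
      have "norm (x - h) \<le> \<delta>" using a by (simp add: dist_norm)
      then have "Delta2 f xb p t x \<ge> ereal (\<beta> - \<epsilon>)" using dd a h by blast
      then show "y < (case (x, t) of (h', t) \<Rightarrow> Delta2 f xb p t h')"
        using z by (simp add: \<epsilon>_def)
    qed
  qed
qed

lemma local_bound:
  fixes f :: "'a::real_inner \<Rightarrow> ereal"
  assumes "0 < lower_sod f xb p h"
  shows "\<exists>c>0. \<exists>r>0. \<exists>d>0. \<forall>h' t. dist h' h < r \<longrightarrow> 0 < t \<longrightarrow> t < d \<longrightarrow> ereal c < Delta2 f xb p t h'"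
proof -
  obtain c where c: "0 < ereal c" "ereal c < lower_sod f xb p h" using ereal_dense2 assms by blast
  have "\<forall>\<^sub>F x in nhds h \<times>\<^sub>F at_right 0. ereal c < (case x of (h', t) \<Rightarrow> Delta2 f xb p t h')"
    using less_LiminfD[OF c(2)[unfolded lower_sod_def]] .
  then obtain Pf Pg where P: "eventually Pf (nhds h)" "eventually Pg (at_right (0::real))"
     "\<forall>x y. Pf x \<longrightarrow> Pg y \<longrightarrow> ereal c < Delta2 f xb p y x"
    unfolding eventually_prod_filter by auto
  obtain r where r: "r > 0" "\<forall>x. dist x h < r \<longrightarrow> Pf x" using P(1) unfolding eventually_nhds_metric by blast
  obtain d where d: "d > 0" "\<forall>y>0. y < d \<longrightarrow> Pg y" using P(2) unfolding eventually_at_right_field by auto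
  have "\<forall>h' t. dist h' h < r \<longrightarrow> 0 < t \<longrightarrow> t < d \<longrightarrow> ereal c < Delta2 f xb p t h'"
  proof (intro allI impI)
    fix h' t assume "dist h' h < r" "0 < t" "t < d"
    then have "Pf h'" "Pg t" using r d by auto
    then show "ereal c < Delta2 f xb p t h'" using P(3) by blast
  qed
  then show ?thesis using c(1) r(1) d(1) by auto
qed

lemma iii_i:
  fixes f :: "'a::real_inner \<Rightarrow> ereal"
  assumes pos: "\<forall>h\<in>A. 0 < lower_sod f xb p h" and ne: "A \<noteq> {}" and cp: "compact A"
  shows "\<exists>\<beta>>0. unif_sod_ge f xb p \<beta> A"
proof -
  have "\<forall>h\<in>A. \<exists>crd. fst crd > 0 \<and> fst (snd crd) > 0 \<and> snd (snd crd) > 0 \<and>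
     (\<forall>h' t. dist h' h < fst (snd crd) \<longrightarrow> 0 < t \<longrightarrow> t < snd (snd crd) \<longrightarrow> ereal (fst crd) < Delta2 f xb p t h')"
  proof
    fix h assume "h \<in> A"
    then obtain c r d where "c>0" "r>0" "d>0" "\<forall>h' t. dist h' h < r \<longrightarrow> 0 < t \<longrightarrow> t < d \<longrightarrow> ereal c < Delta2 f xb p t h'"
      using local_bound pos by metis
    then show "\<exists>crd. fst crd > 0 \<and> fst (snd crd) > 0 \<and> snd (snd crd) > 0 \<and>
     (\<forall>h' t. dist h' h < fst (snd crd) \<longrightarrow> 0 < t \<longrightarrow> t < snd (snd crd) \<longrightarrow> ereal (fst crd) < Delta2 f xb p t h')"
      by (intro exI[of _ "(c,r,d)"]) auto
  qed
  then obtain F where F: "\<forall>h\<in>A. fst (F h) > 0 \<and> fst (snd (F h)) > 0 \<and> snd (snd (F h)) > 0 \<and>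
     (\<forall>h' t. dist h' h < fst (snd (F h)) \<longrightarrow> 0 < t \<longrightarrow> t < snd (snd (F h)) \<longrightarrow> ereal (fst (F h)) < Delta2 f xb p t h')"
    by (metis (no_types, lifting) bchoice)
  define c where "c h = fst (F h)" for h
  define r where "r h = fst (snd (F h))" for h
  define d where "d h = snd (snd (F h))" for h
  have Fc: "\<And>h. h \<in> A \<Longrightarrow> c h > 0 \<and> r h > 0 \<and> d h > 0 \<and>
     (\<forall>h' t. dist h' h < r h \<longrightarrow> 0 < t \<longrightarrow> t < d h \<longrightarrow> ereal (c h) < Delta2 f xb p t h')"
    using F unfolding c_def r_def d_def by blast
  have cov: "A \<subseteq> \<Union> ((\<lambda>h. ball h (r h / 2)) ` A)"
  proof
    fix x assume "x \<in> A" then show "x \<in> \<Union> ((\<lambda>h. ball h (r h / 2)) ` A)"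
      using Fc[of x] by force
  qed
  obtain T where T: "T \<subseteq> A" "finite T" "A \<subseteq> \<Union> ((\<lambda>h. ball h (r h / 2)) ` T)"
    using compactE_image[OF cp _ cov] by blast
  have Tne: "T \<noteq> {}" using T(3) ne by auto
  define \<beta> where "\<beta> = Min (c ` T)"
  define \<delta> where "\<delta> = Min ((\<lambda>h. min (r h / 2) (d h)) ` T)"
  have bpos: "\<beta> > 0" unfolding \<beta>_def using T Tne Fc by (auto simp: Min_gr_iff)
  have dpos: "\<delta> > 0" unfolding \<delta>_def using T Tne Fc by (auto simp: Min_gr_iff)
  have "unif_sod_ge f xb p \<beta> A"
    unfolding unif_sod_ge_def
  proof (intro allI impI exI[of _ \<delta>] conjI ballI)
    fix \<epsilon> t h :: 'a and \<epsilon>' :: real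
    show "\<delta> > 0" by (rule dpos)
  next
    fix \<epsilon> :: real and t h
    assume e: "\<epsilon> > 0" and t: "t \<in> {0<..<\<delta>}" and ha: "\<exists>a\<in>A. norm (h - a) \<le> \<delta>"
    then obtain a where a: "a \<in> A" "norm (h - a) \<le> \<delta>" by blast
    then obtain k where k: "k \<in> T" "a \<in> ball k (r k / 2)" using T(3) by blast
    have le1: "\<delta> \<le> min (r k / 2) (d k)" unfolding \<delta>_def using T k by (intro Min_le) auto
    have "dist h k \<le> dist h a + dist a k" by (rule dist_triangle)
    also have "\<dots> < r k" using a k le1 norm_minus_commute[of a k] by (auto simp: dist_norm)
    finally have hk: "dist h k < r k" .
    have tk: "0 < t" "t < d k" using t le1 by auto
    have "ereal (c k) < Delta2 f xb p t h" using Fc[of k] T k hk tk by blast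
    moreover have "\<beta> \<le> c k" unfolding \<beta>_def using T k by simp
    ultimately show "ereal (\<beta> - \<epsilon>) \<le> Delta2 f xb p t h" using e
      by (metis diff_le_eq ereal_less_eq(3) less_add_same_cancel1 less_imp_le order_le_less_trans order.strict_trans1)
  qed
  then show ?thesis using bpos by blast
qed

theorem proposition5p1:
  fixes f :: "'a::{real_inner, complete_space} \<Rightarrow> ereal"
    and xb p :: 'a and A :: "'a set"
  assumes "proper_fun f" and "lsc_fun f"
    and "xb \<in> dom_fun f"
    and "p \<in> prox_subdiff f xb"
    and "A \<noteq> {}" and "compact A"
  shows "((\<exists>\<beta>>0. unif_sod_ge f xb p \<beta> A) \<longleftrightarrow> (\<exists>\<beta>>0. \<forall>h\<in>A. lower_sod f xb p h \<ge> ereal \<beta>))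
       \<and> ((\<exists>\<beta>>0. \<forall>h\<in>A. lower_sod f xb p h \<ge> ereal \<beta>) \<longleftrightarrow> (\<forall>h\<in>A. lower_sod f xb p h > 0))"
proof -
  have 12: "(\<exists>\<beta>>0. unif_sod_ge f xb p \<beta> A) \<Longrightarrow> (\<exists>\<beta>>0. \<forall>h\<in>A. lower_sod f xb p h \<ge> ereal \<beta>)"
    using i_ii by blast
  have 23: "(\<exists>\<beta>>0. \<forall>h\<in>A. lower_sod f xb p h \<ge> ereal \<beta>) \<Longrightarrow> (\<forall>h\<in>A. lower_sod f xb p h > 0)"
    by (metis ereal_less(2) order_less_le_trans)
  have 31: "(\<forall>h\<in>A. lower_sod f xb p h > 0) \<Longrightarrow> (\<exists>\<beta>>0. unif_sod_ge f xb p \<beta> A)"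
    using iii_i assms(5,6) by blast
  show ?thesis using 12 23 31 by blast
qed

end
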